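(* Let $\mathcal N=(Q,\Sigma,\delta,I,F)$ be an NFA with $L=\mathcal L(\mathcal N)$. Then $\mathsf G^r(\mathcal N)$ (equivalently, the determinization $\mathcal N^D$) is the minimal DFA for $L$ (up to isomorphism) if and only if for every $q\in Q$, $P_{\sim^r_L}(W^{\mathcal N}_{I,q})=W^{\mathcal N}_{I,q}$.
   Context: NFA $\mathcal N=(Q,\Sigma,\delta,I,F)$ with $\delta:Q\times\Sigma\to\wp(Q)$ extended to words as $\hat\delta$; $W^{\mathcal N}_{S,T}=\{w\in\Sigma^*\mid\exists q\in S,q'\in T: q'\in\hat\delta(q,w)\}$ (singletons without braces); $\mathrm{post}^{\mathcal N}_w(S)=\{q\mid w\in W^{\mathcal N}_{S,q}\}$; $\mathcal L(\mathcal N)=W^{\mathcal N}_{I,F}$. $u\sim^r_L v\iff u^{-1}L=v^{-1}L$ where $u^{-1}L=\{x\mid ux\in L\}$; $u\sim^r_{\mathcal N}v\iff \mathrm{post}^{\mathcal N}_u(I)=\mathrm{post}^{\mathcal N}_v(I)$. For an equivalence $\sim$, $P_\sim(u)$ is the class of $u$ and $P_\sim(S)=\bigcup_{u\in S}P_\sim(u)$. $\mathsf G^r(\mathcal N)$ is the DFA with states $\{P_{\sim^r_{\mathcal N}}(u)\mid u\in\Sigma^*\}$, initial state $P_{\sim^r_{\mathcal N}}(\varepsilon)$, final states $\{P_{\sim^r_{\mathcal N}}(u)\mid u\in L\}$, and transition from $P_{\sim^r_{\mathcal N}}(u)$ on $a$ to $P_{\sim^r_{\mathcal N}}(ua)$;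 it is isomorphic to the reachable subset-construction DFA $\mathcal N^D$. The minimal DFA for $L$ is the unique (up to isomorphism) complete DFA for $L$ with fewest states. *)

theory Defs
  imports Main
begin

record ('q, 'b) nfa =
  nQ :: "'q set"
  nDelta :: "'q \<Rightarrow> 'b \<Rightarrow> 'q set"
  nI :: "'q set"
  nF :: "'q set"

definition is_NFA :: "('q, 'b::finite) nfa \<Rightarrow> bool" where
  "is_NFA N \<longleftrightarrow> finite (nQ N) \<and> nI N \<subseteq> nQ N \<and> nF N \<subseteq> nQ N
     \<and> (\<forall>q\<in>nQ N. \<forall>a. nDelta N q a \<subseteq> nQ N)"

fun delta_hat :: "('q, 'b) nfa \<Rightarrow> 'q \<Rightarrow> 'b list \<Rightarrow> 'q set" where
  "delta_hat N q [] = {q}"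
| "delta_hat N q (a # w) = (\<Union>p \<in> nDelta N q a. delta_hat N p w)"

definition W :: "('q, 'b) nfa \<Rightarrow> 'q set \<Rightarrow> 'q set \<Rightarrow> 'b list set" where
  "W N S T = {w. \<exists>q\<in>S. \<exists>q'\<in>T. q' \<in> delta_hat N q w}"

definition post :: "('q, 'b) nfa \<Rightarrow> 'b list \<Rightarrow> 'q set \<Rightarrow> 'q set" where
  "post N w S = {q. w \<in> W N S {q}}"

definition nfa_lang :: "('q, 'b) nfa \<Rightarrow> 'b list set" where
  "nfa_lang N = W N (nI N) (nF N)"

definition left_quot :: "'b list \<Rightarrow> 'b list set \<Rightarrow> 'b list set" where
  "left_quot u L = {x. u @ x \<in> L}"

definition right_equiv_lang :: "'b list set \<Rightarrow> 'b list \<Rightarrow> 'b list \<Rightarrow> bool" where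
  "right_equiv_lang L u v \<longleftrightarrow> left_quot u L = left_quot v L"

definition right_equiv_nfa :: "('q, 'b) nfa \<Rightarrow> 'b list \<Rightarrow> 'b list \<Rightarrow> bool" where
  "right_equiv_nfa N u v \<longleftrightarrow> post N u (nI N) = post N v (nI N)"

definition cls :: "('w \<Rightarrow> 'w \<Rightarrow> bool) \<Rightarrow> 'w \<Rightarrow> 'w set" where
  "cls R u = {v. R u v}"

definition cls_set :: "('w \<Rightarrow> 'w \<Rightarrow> bool) \<Rightarrow> 'w set \<Rightarrow> 'w set" where
  "cls_set R S = (\<Union>u\<in>S. cls R u)"

record ('s, 'b) dfa =
  dStates :: "'s set"
  dInit :: 's
  dFinal :: "'s set"
  dTrans :: "'s \<Rightarrow> 'b \<Rightarrow> 's"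

definition is_DFA :: "('s, 'b) dfa \<Rightarrow> bool" where
  "is_DFA D \<longleftrightarrow> dInit D \<in> dStates D \<and> dFinal D \<subseteq> dStates D
     \<and> (\<forall>s\<in>dStates D. \<forall>a. dTrans D s a \<in> dStates D)"

definition dfa_lang :: "('s, 'b) dfa \<Rightarrow> 'b list set" where
  "dfa_lang D = {w. foldl (dTrans D) (dInit D) w \<in> dFinal D}"

definition dfa_iso :: "('s, 'b) dfa \<Rightarrow> ('t, 'b) dfa \<Rightarrow> bool" where
  "dfa_iso D E \<longleftrightarrow> (\<exists>f. bij_betw f (dStates D) (dStates E) \<and> f (dInit D) = dInit E
     \<and> (\<forall>s\<in>dStates D. f s \<in> dFinal E \<longleftrightarrow> s \<in> dFinal D)
     \<and> (\<forall>s\<in>dStates D. \<forall>a. f (dTrans D s a) = dTrans E (f s) a))"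

text \<open>Competitors are
  taken with states in nat; every DFA with finitely many states can be relabelled into
  nat, and a DFA with infinitely many states never has fewer states than a finite one.\<close>
definition is_minimal_DFA :: "('s, 'b) dfa \<Rightarrow> 'b list set \<Rightarrow> bool" where
  "is_minimal_DFA D L \<longleftrightarrow> is_DFA D \<and> dfa_lang D = L \<and> finite (dStates D)
     \<and> (\<forall>D' :: (nat, 'b) dfa. is_DFA D' \<and> finite (dStates D') \<and> dfa_lang D' = L
          \<longrightarrow> card (dStates D) \<le> card (dStates D'))"

definition Gr :: "('q, 'b) nfa \<Rightarrow> ('b list set, 'b) dfa" where
  "Gr N = \<lparr> dStates = {cls (right_equiv_nfa N) u | u. True},
           dInit = cls (right_equiv_nfa N) [],
           dFinal = {cls (right_equiv_nfa N) u | u. u \<in> nfa_lang N},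
           dTrans = (\<lambda>S a. cls (right_equiv_nfa N)
                       ((SOME u. S = cls (right_equiv_nfa N) u) @ [a])) \<rparr>"

end

theory Submission
  imports Defs
begin

definition QDFA :: "('w list \<Rightarrow> 'w list \<Rightarrow> bool) \<Rightarrow> 'w list set \<Rightarrow> ('w list set, 'w) dfa" where
  "QDFA R L = \<lparr> dStates = {cls R u | u. True},
           dInit = cls R [],
           dFinal = {cls R u | u. u \<in> L},
           dTrans = (\<lambda>S a. cls R ((SOME u. S = cls R u) @ [a])) \<rparr>"

lemma Gr_QDFA: "Gr N = QDFA (right_equiv_nfa N) (nfa_lang N)"
  by (simp add: Gr_def QDFA_def)

lemma cls_eq: "equivp R \<Longrightarrow> cls R u = cls R v \<longleftrightarrow> R u v"
  unfolding cls_def equivp_def by (metis Collect_cong Collect_mem_eq mem_Collect_eq)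

locale qd =
  fixes R :: "'w list \<Rightarrow> 'w list \<Rightarrow> bool" and L :: "'w list set"
  assumes eq: "equivp R"
    and cong: "\<And>u v a. R u v \<Longrightarrow> R (u @ [a]) (v @ [a])"
    and ref: "\<And>u v. R u v \<Longrightarrow> u \<in> L \<longleftrightarrow> v \<in> L"
begin

lemma isdfa: "is_DFA (QDFA R L)"
  unfolding is_DFA_def QDFA_def by auto

lemma fold: "foldl (dTrans (QDFA R L)) (cls R u) w = cls R (u @ w)"
proof (induction w arbitrary: u)
  case Nil then show ?case by simp
next
  case (Cons a w)
  have "\<exists>v. cls R u = cls R v" by blast
  then have "cls R u = cls R (SOME v. cls R u = cls R v)" by (rule someI_ex)
  then have "R u (SOME v. cls R u = cls R v)" using cls_eq[OF eq] by blast
  then have "R (u@[a]) ((SOME v. cls R u = cls R v) @ [a])" by (rule cong)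
  then have e: "cls R ((SOME v. cls R u = cls R v) @ [a]) = cls R (u@[a])"
    using cls_eq[OF eq] by (metis eq equivp_symp)
  have "dTrans (QDFA R L) (cls R u) a = cls R ((SOME v. cls R u = cls R v) @ [a])"
    by (simp add: QDFA_def)
  then have "dTrans (QDFA R L) (cls R u) a = cls R (u @ [a])" using e by simp
  then show ?case using Cons by simp
qed

lemma lang: "dfa_lang (QDFA R L) = L"
proof -
  have "foldl (dTrans (QDFA R L)) (dInit (QDFA R L)) w = cls R w" for w
    using fold[of "[]" w] by (simp add: QDFA_def)
  moreover have "cls R w \<in> dFinal (QDFA R L) \<longleftrightarrow> w \<in> L" for w
    unfolding QDFA_def using cls_eq[OF eq] ref by auto
  ultimately show ?thesis unfolding dfa_lang_def by auto
qed

end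

lemma relabel:
  fixes D :: "('s, 'b) dfa"
  assumes "is_DFA D" "finite (dStates D)"
  shows "\<exists>E::(nat,'b) dfa. is_DFA E \<and> finite (dStates E) \<and> dfa_iso D E
     \<and> dfa_lang E = dfa_lang D \<and> card (dStates E) = card (dStates D)"
proof -
  let ?S = "dStates D"
  obtain h where h: "bij_betw h ?S {0..<card ?S}" using ex_bij_betw_finite_nat assms(2) by blast
  define E :: "(nat,'b) dfa" where "E = \<lparr> dStates = h ` ?S, dInit = h (dInit D),
      dFinal = h ` dFinal D, dTrans = (\<lambda>n a. h (dTrans D (inv_into ?S h n) a)) \<rparr>"
  have inj: "inj_on h ?S" using h bij_betw_def by blast
  have dfa: "is_DFA E" using assms(1) inj unfolding E_def is_DFA_def by auto
  have tr: "\<forall>s\<in>?S. \<forall>a. h (dTrans D s a) = dTrans E (h s) a"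
    unfolding E_def using inj by simp
  have fin: "\<forall>s\<in>?S. h s \<in> dFinal E \<longleftrightarrow> s \<in> dFinal D"
    unfolding E_def using inj assms(1) unfolding is_DFA_def inj_on_def by auto
  have iso: "dfa_iso D E" unfolding dfa_iso_def
    apply (rule exI[of _ h])
    using tr fin inj by (auto simp: E_def bij_betw_def)
  have fl: "s \<in> ?S \<Longrightarrow> foldl (dTrans D) s w \<in> ?S \<and> h (foldl (dTrans D) s w) = foldl (dTrans E) (h s) w" for s w
  proof (induction w arbitrary: s)
    case Nil then show ?case by simp
  next
    case (Cons a w)
    have "dTrans D s a \<in> ?S" using assms(1) Cons.prems unfolding is_DFA_def by blast
    then show ?case using Cons tr by simp
  qed
  have "dfa_lang E = dfa_lang D"
  proof -
    have "dInit D \<in> ?S" using assms(1) unfolding is_DFA_def by blast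
    have "foldl (dTrans E) (dInit E) w \<in> dFinal E \<longleftrightarrow> foldl (dTrans D) (dInit D) w \<in> dFinal D" for w
    proof -
      have ie: "dInit E = h (dInit D)" by (simp add: E_def)
      from fl[OF \<open>dInit D \<in> ?S\<close>, of w] fin ie show ?thesis by metis
    qed
    then show ?thesis unfolding dfa_lang_def by auto
  qed
  moreover have "card (dStates E) = card ?S" unfolding E_def using card_image[OF inj] by simp
  moreover have "finite (dStates E)" unfolding E_def using assms(2) by simp
  ultimately show ?thesis using dfa iso by blast
qed

lemma iso_card: "dfa_iso D E \<Longrightarrow> card (dStates D) = card (dStates E)"
  unfolding dfa_iso_def using bij_betw_same_card by blast

lemma lower:
  assumes "is_DFA D" "finite (dStates D)" "dfa_lang D = L"
  shows "card {cls (right_equiv_lang L) u | u. True} \<le> card (dStates D)"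
proof -
  define g where "g u = foldl (dTrans D) (dInit D) u" for u
  have st: "s \<in> dStates D \<Longrightarrow> foldl (dTrans D) s w \<in> dStates D" for s w
    using assms(1) unfolding is_DFA_def by (induction w arbitrary: s) auto
  have gS: "g u \<in> dStates D" for u using st assms(1) unfolding g_def is_DFA_def by blast
  have geq: "cls (right_equiv_lang L) u = cls (right_equiv_lang L) v" if gg: "g u = g v" for u v
  proof -
    have "u@x \<in> L \<longleftrightarrow> v@x \<in> L" for x using gg unfolding assms(3)[symmetric] g_def dfa_lang_def by simp
    then have "left_quot u L = left_quot v L" unfolding left_quot_def by simp
    then show ?thesis unfolding cls_def right_equiv_lang_def by simp
  qed
  define k where "k s = cls (right_equiv_lang L) (SOME u. g u = s)" for s
  have "{cls (right_equiv_lang L) u | u. True} \<subseteq> k ` dStates D"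
  proof
    fix X assume "X \<in> {cls (right_equiv_lang L) u | u. True}"
    then obtain u where u: "X = cls (right_equiv_lang L) u" by blast
    have "g (SOME v. g v = g u) = g u" by (rule someI_ex) blast
    then have "k (g u) = X" unfolding k_def u using geq by metis
    then show "X \<in> k ` dStates D" using gS by blast
  qed
  then have "card {cls (right_equiv_lang L) u | u. True} \<le> card (k ` dStates D)"
    using assms(2) by (simp add: card_mono)
  also have "\<dots> \<le> card (dStates D)" using assms(2) by (rule card_image_le)
  finally show ?thesis .
qed

lemma dh_app: "delta_hat N q (u@v) = (\<Union>p\<in>delta_hat N q u. delta_hat N p v)"
  by (induction u arbitrary: q) auto

lemma post_app: "post N (u@v) S = post N v (post N u S)"
  unfolding post_def W_def by (auto simp: dh_app)

lemma dh_Q: "is_NFA N \<Longrightarrow> q \<in> nQ N \<Longrightarrow> delta_hat N q w \<subseteq> nQ N"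
proof (induction w arbitrary: q)
  case Nil then show ?case by simp
next
  case (Cons a w)
  have "nDelta N q a \<subseteq> nQ N" using Cons.prems unfolding is_NFA_def by blast
  then show ?case using Cons.IH Cons.prems(1) by auto
qed

lemma post_Q: "is_NFA N \<Longrightarrow> S \<subseteq> nQ N \<Longrightarrow> post N w S \<subseteq> nQ N"
proof
  fix x assume a: "is_NFA N" "S \<subseteq> nQ N" "x \<in> post N w S"
  then obtain q where q: "q \<in> S" "x \<in> delta_hat N q w" unfolding post_def W_def by blast
  have "delta_hat N q w \<subseteq> nQ N" using dh_Q[OF a(1)] q(1) a(2) by blast
  then show "x \<in> nQ N" using q(2) by blast
qed

lemma lang_post: "w \<in> nfa_lang N \<longleftrightarrow> post N w (nI N) \<inter> nF N \<noteq> {}"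
  unfolding nfa_lang_def post_def W_def by auto

lemma RN_RL: "right_equiv_nfa N u v \<Longrightarrow> right_equiv_lang (nfa_lang N) u v"
  unfolding right_equiv_nfa_def right_equiv_lang_def left_quot_def
  by (simp add: lang_post post_app)

lemma qdN: "qd (right_equiv_nfa N) (nfa_lang N)"
  unfolding qd_def
  by (auto simp: equivp_def right_equiv_nfa_def fun_eq_iff post_app lang_post)

lemma eqL: "equivp (right_equiv_lang L)"
  by (auto simp: equivp_def right_equiv_lang_def fun_eq_iff)

lemma qdL: "qd (right_equiv_lang L) L"
  unfolding qd_def
proof (intro conjI allI impI eqL)
  fix u v a assume "right_equiv_lang L u v"
  then show "right_equiv_lang L (u @ [a]) (v @ [a])"
    unfolding right_equiv_lang_def left_quot_def set_eq_iff
    by (metis append.assoc append_Cons append_Nil mem_Collect_eq)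
next
  fix u v assume "right_equiv_lang L u v"
  then show "(u \<in> L) = (v \<in> L)"
    unfolding right_equiv_lang_def left_quot_def set_eq_iff
    by (metis append_Nil2 mem_Collect_eq)
qed

lemma finCN: assumes "is_NFA N" shows "finite {cls (right_equiv_nfa N) u | u. True}"
proof -
  have "{cls (right_equiv_nfa N) u | u. True} \<subseteq> (\<lambda>S. {v. S = post N v (nI N)}) ` Pow (nQ N)"
  proof
    fix X assume "X \<in> {cls (right_equiv_nfa N) u | u. True}"
    then obtain u where u: "X = cls (right_equiv_nfa N) u" by blast
    have "post N u (nI N) \<subseteq> nQ N" using post_Q assms unfolding is_NFA_def by blast
    then show "X \<in> (\<lambda>S. {v. S = post N v (nI N)}) ` Pow (nQ N)"
      unfolding u cls_def right_equiv_nfa_def by blast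
  qed
  moreover have "finite (nQ N)" using assms unfolding is_NFA_def by blast
  ultimately show ?thesis by (meson finite_Pow_iff finite_imageI finite_subset)
qed

lemma surjCL:
  assumes "equivp RN" "equivp RL" "\<And>u v. RN u v \<Longrightarrow> RL u v"
  defines "phi \<equiv> (\<lambda>X. cls RL (SOME u. X = cls RN u))"
  shows "phi ` {cls RN u | u. True} = {cls RL u | u. True}"
proof -
  have "phi (cls RN u) = cls RL u" for u
  proof -
    have "cls RN u = cls RN (SOME v. cls RN u = cls RN v)" by (rule someI_ex) blast
    then have "RN u (SOME v. cls RN u = cls RN v)" using cls_eq[OF assms(1)] by blast
    then have "RL u (SOME v. cls RN u = cls RN v)" by (rule assms(3))
    then show ?thesis unfolding phi_def using cls_eq[OF assms(2)] by (metis assms(2) equivp_symp)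
  qed
  then show ?thesis by auto
qed

lemma card_eq_refine:
  assumes "equivp RN" "equivp RL" "\<And>u v. RN u v \<Longrightarrow> RL u v"
    and fin: "finite {cls RN u | u. True}"
    and le: "card {cls RN u | u. True} \<le> card {cls RL u | u. True}"
    and r: "RL u v"
  shows "RN u v"
proof -
  define phi where "phi = (\<lambda>X. cls RL (SOME u. X = cls RN u))"
  have im: "phi ` {cls RN u | u. True} = {cls RL u | u. True}"
    unfolding phi_def by (rule surjCL[OF assms(1-3)])
  have "card (phi ` {cls RN u | u. True}) \<le> card {cls RN u | u. True}"
    using fin card_image_le by blast
  with le im have "card (phi ` {cls RN u | u. True}) = card {cls RN u | u. True}" by simp
  then have inj: "inj_on phi {cls RN u | u. True}" using fin eq_card_imp_inj_on by blast
  have ph: "phi (cls RN w) = cls RL w" for w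
  proof -
    have "cls RN w = cls RN (SOME v. cls RN w = cls RN v)" by (rule someI_ex) blast
    then have "RN w (SOME v. cls RN w = cls RN v)" using cls_eq[OF assms(1)] by blast
    then have "RL w (SOME v. cls RN w = cls RN v)" by (rule assms(3))
    then show ?thesis unfolding phi_def using cls_eq[OF assms(2)] by (metis assms(2) equivp_symp)
  qed
  have "phi (cls RN u) = phi (cls RN v)" using ph r cls_eq[OF assms(2)] by simp
  then have "cls RN u = cls RN v" using inj unfolding inj_on_def by blast
  then show ?thesis using cls_eq[OF assms(1)] by blast
qed

theorem theorem2:
  fixes N :: "('q, 'b::finite) nfa"
  assumes "is_NFA N"
  shows "(\<exists>M :: (nat, 'b) dfa. is_minimal_DFA M (nfa_lang N) \<and> dfa_iso (Gr N) M)
     \<longleftrightarrow> (\<forall>q\<in>nQ N. cls_set (right_equiv_lang (nfa_lang N)) (W N (nI N) {q}) = W N (nI N) {q})"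
proof -
  let ?L = "nfa_lang N"
  let ?RN = "right_equiv_nfa N" and ?RL = "right_equiv_lang ?L"
  let ?CN = "{cls ?RN u | u. True}" and ?CL = "{cls ?RL u | u. True}"
  have eN: "equivp ?RN" using qdN qd_def by blast
  have eL: "equivp ?RL" by (rule eqL)
  have fCN: "finite ?CN" using finCN[OF assms] .
  have fCL: "finite ?CL" using surjCL[OF eN eL RN_RL] fCN by (metis finite_imageI)
  have GS: "dStates (Gr N) = ?CN" by (simp add: Gr_def)
  have Gdfa: "is_DFA (Gr N)" using qd.isdfa[OF qdN] Gr_QDFA by metis
  have Glang: "dfa_lang (Gr N) = ?L" using qd.lang[OF qdN] Gr_QDFA by metis
  show ?thesis
  proof
    assume "\<exists>M :: (nat, 'b) dfa. is_minimal_DFA M ?L \<and> dfa_iso (Gr N) M"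
    then obtain M :: "(nat,'b) dfa" where M: "is_minimal_DFA M ?L" "dfa_iso (Gr N) M" by blast
    have "card (dStates M) = card ?CN" using iso_card[OF M(2)] GS by simp
    obtain E :: "(nat,'b) dfa" where E: "is_DFA E" "finite (dStates E)" "dfa_lang E = ?L"
       "card (dStates E) = card ?CL"
    proof -
      have QS: "dStates (QDFA ?RL ?L) = ?CL" by (simp add: QDFA_def)
      have "finite (dStates (QDFA ?RL ?L))" using QS fCL by simp
      from relabel[OF qd.isdfa[OF qdL] this] obtain E :: "(nat,'b) dfa" where
        "is_DFA E" "finite (dStates E)" "dfa_lang E = dfa_lang (QDFA ?RL ?L)"
        "card (dStates E) = card (dStates (QDFA ?RL ?L))" by blast
      moreover have "dfa_lang (QDFA ?RL ?L) = ?L" by (rule qd.lang[OF qdL])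
      ultimately show ?thesis using that QS by metis
    qed
    have "card (dStates M) \<le> card (dStates E)" using M(1) E unfolding is_minimal_DFA_def by blast
    then have le: "card ?CN \<le> card ?CL" using E(4) \<open>card (dStates M) = card ?CN\<close> by simp
    have rl: "?RL u v \<Longrightarrow> ?RN u v" for u v
      using card_eq_refine[OF eN eL RN_RL fCN le] by blast
    show "\<forall>q\<in>nQ N. cls_set ?RL (W N (nI N) {q}) = W N (nI N) {q}"
    proof (intro ballI equalityI subsetI)
      fix q x assume "x \<in> cls_set ?RL (W N (nI N) {q})"
      then obtain u where u: "u \<in> W N (nI N) {q}" "?RL u x" unfolding cls_set_def cls_def by blast
      have "post N u (nI N) = post N x (nI N)" using rl[OF u(2)] unfolding right_equiv_nfa_def .
      then show "x \<in> W N (nI N) {q}" using u(1) unfolding post_def set_eq_iff by blast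
    next
      fix q x assume "x \<in> W N (nI N) {q}"
      moreover have "x \<in> cls ?RL x" by (simp add: cls_def right_equiv_lang_def)
      ultimately show "x \<in> cls_set ?RL (W N (nI N) {q})" unfolding cls_set_def by blast
    qed
  next
    assume C: "\<forall>q\<in>nQ N. cls_set ?RL (W N (nI N) {q}) = W N (nI N) {q}"
    have rl: "?RN u v" if r: "?RL u v" for u v
    proof -
      have r': "?RL v u" using r eL equivp_symp by metis
      have "q \<in> post N v (nI N)" if "q \<in> post N u (nI N)" "?RL u v" for q u v
      proof -
        have IQ: "nI N \<subseteq> nQ N" using assms unfolding is_NFA_def by blast
        have "q \<in> nQ N" using post_Q[OF assms IQ] that(1) by blast
        moreover have "u \<in> W N (nI N) {q}" using that(1) unfolding post_def by blast
        ultimately have "v \<in> cls_set ?RL (W N (nI N) {q})" using that(2) unfolding cls_set_def cls_def by blast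
        then have "v \<in> W N (nI N) {q}" using C \<open>q \<in> nQ N\<close> by blast
        then show ?thesis unfolding post_def by blast
      qed
      then show ?thesis using r r' unfolding right_equiv_nfa_def by blast
    qed
    have CE: "?CN = ?CL"
    proof -
      have "cls ?RN u = cls ?RL u" for u using rl RN_RL unfolding cls_def by blast
      then show ?thesis by simp
    qed
    obtain M :: "(nat,'b) dfa" where M: "is_DFA M" "finite (dStates M)" "dfa_iso (Gr N) M"
       "dfa_lang M = ?L" "card (dStates M) = card ?CN"
      using relabel[OF Gdfa] Glang GS fCN by auto
    have "is_minimal_DFA M ?L" unfolding is_minimal_DFA_def
    proof (intro conjI allI impI)
      fix D' :: "(nat,'b) dfa" assume D': "is_DFA D' \<and> finite (dStates D') \<and> dfa_lang D' = ?L"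
      have "card ?CL \<le> card (dStates D')" using lower[of D' ?L] D' by blast
      then show "card (dStates M) \<le> card (dStates D')" using M(5) CE by simp
    qed (use M in auto)
    then show "\<exists>M :: (nat, 'b) dfa. is_minimal_DFA M ?L \<and> dfa_iso (Gr N) M" using M by blast
  qed
qed

end
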